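(* Consider a ROS~2 application executed on a single processor by the events executor with the two-queue mechanism described in the context, under the standing assumptions of the context. If $\tau_b$ is the currently running subtask and $\tau_a$ is any released but unscheduled subtask in the executor's queues, then their priorities satisfy $P_a \leq P_b$.
   Context: Model: a ROS~2 application is abstracted as a forest of trees of subtasks. Roots are released periodically/sporadically with known integer job priorities; a child subtask is released immediately when its parent completes, and inherits its parent's priority (fixed job-level priority). Execution is non-preemptive on a single processor; larger priority values mean higher priority. Executor mechanism: released root subtasks go into a priority queue (root_queue); a released child subtask is assigned the value latest_priority and pushed onto a LIFO queue (child_queue); at each scheduling decision (which occurs whenever the processor becomes free) the tops of the two queues are compared, the one of greater priority is popped and executed, and latest_priority is set to its priority. *)

theory Defs
  imports Main
begin

text \<open>Jobs (subtask instances) have type 'j.  prio j is the fixed job-level priority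
  (larger = higher).  children j lists the child subtasks released when j completes
  (pushed onto the LIFO queue in list order).  roots is the set of root jobs.\<close>

record 'j exec_state =
  rq :: "'j set"                 \<comment> \<open>root_queue (priority queue)\<close>
  cq :: "('j \<times> int) list"        \<comment> \<open>child_queue (LIFO, head = top), with assigned value\<close>
  latest :: int
  running :: "'j option"         \<comment> \<open>currently running subtask (None = processor free)\<close>
  rel :: "'j set"

definition pending :: "('j, 'b) exec_state_scheme \<Rightarrow> 'j set" where
  "pending s = rq s \<union> fst ` set (cq s)"

definition exec_init :: "'j exec_state \<Rightarrow> bool" where
  "exec_init s \<longleftrightarrow> rq s = {} \<and> cq s = [] \<and> running s = None \<and> rel s = {}"

text \<open>A root job is released (sporadically, at any time).  Scheduling decisions are
  instantaneous: while the processor is free and some queue is non-empty, only a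
  dispatch step is enabled.\<close>
definition release_step :: "'j set \<Rightarrow> 'j exec_state \<Rightarrow> 'j exec_state \<Rightarrow> bool" where
  "release_step roots s s' \<longleftrightarrow>
     \<not> (running s = None \<and> pending s \<noteq> {}) \<and>
     (\<exists>r. r \<in> roots \<and> r \<notin> rel s \<and>
          s' = s\<lparr>rq := insert r (rq s), rel := insert r (rel s)\<rparr>)"

definition complete_step :: "('j \<Rightarrow> 'j list) \<Rightarrow> 'j exec_state \<Rightarrow> 'j exec_state \<Rightarrow> bool" where
  "complete_step children s s' \<longleftrightarrow>
     (\<exists>b. running s = Some b \<and>
          s' = s\<lparr>cq := map (\<lambda>c. (c, latest s)) (rev (children b)) @ cq s,
                 running := None,
                 rel := rel s \<union> set (children b)\<rparr>)"

definition dispatch_step :: "('j \<Rightarrow> int) \<Rightarrow> 'j exec_state \<Rightarrow> 'j \<Rightarrow> 'j exec_state \<Rightarrow> bool" where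
  "dispatch_step prio s b s' \<longleftrightarrow> running s = None \<and>
     ((b \<in> rq s \<and> (\<forall>x\<in>rq s. prio x \<le> prio b) \<and>
        (\<forall>c v cs. cq s = (c, v) # cs \<longrightarrow> v \<le> prio b) \<and>
        s' = s\<lparr>rq := rq s - {b}, running := Some b, latest := prio b\<rparr>)
    \<or> (\<exists>v cs. cq s = (b, v) # cs \<and> (\<forall>x\<in>rq s. prio x \<le> v) \<and>
        s' = s\<lparr>cq := cs, running := Some b, latest := v\<rparr>))"

definition exec_step ::
  "('j \<Rightarrow> int) \<Rightarrow> 'j set \<Rightarrow> ('j \<Rightarrow> 'j list) \<Rightarrow> 'j exec_state \<Rightarrow> 'j exec_state \<Rightarrow> bool" where
  "exec_step prio roots children s s' \<longleftrightarrow>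
     release_step roots s s' \<or> complete_step children s s' \<or> (\<exists>b. dispatch_step prio s b s')"

definition exec_reachable ::
  "('j \<Rightarrow> int) \<Rightarrow> 'j set \<Rightarrow> ('j \<Rightarrow> 'j list) \<Rightarrow> 'j exec_state \<Rightarrow> bool" where
  "exec_reachable prio roots children s \<longleftrightarrow>
     (\<exists>s0. exec_init s0 \<and> (exec_step prio roots children)\<^sup>*\<^sup>* s0 s)"

end

theory Submission
  imports Defs
begin

definition inv3 :: "('j \<Rightarrow> int) \<Rightarrow> 'j exec_state \<Rightarrow> bool" where
  "inv3 prio s \<longleftrightarrow> (\<forall>p\<in>set (cq s). snd p = prio (fst p))
     \<and> sorted_wrt (\<lambda>x y. snd y \<le> snd x) (cq s)
     \<and> (\<forall>b. running s = Some b \<longrightarrow> latest s = prio b \<and> (\<forall>p\<in>set (cq s). snd p \<le> prio b))"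

lemma inv3_step:
  assumes inherit: "\<And>j c. c \<in> set (children j) \<Longrightarrow> prio c = prio j"
    and st: "exec_step prio roots children s s'" and i: "inv3 prio s"
  shows "inv3 prio s'"
  using st unfolding exec_step_def
proof (elim disjE exE)
  assume "release_step roots s s'"
  then show ?thesis using i unfolding release_step_def inv3_def by (elim conjE exE) simp
next
  assume "complete_step children s s'"
  then obtain b where rb: "running s = Some b" and s': "s' = s\<lparr>cq := map (\<lambda>c. (c, latest s)) (rev (children b)) @ cq s,
                 running := None, rel := rel s \<union> set (children b)\<rparr>"
    by (auto simp: complete_step_def)
  have lb: "latest s = prio b" and le: "\<forall>p\<in>set (cq s). snd p \<le> prio b" using i rb unfolding inv3_def by blast+
  have i1: "\<forall>p\<in>set (cq s). snd p = prio (fst p)"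
    and i2: "sorted_wrt (\<lambda>x y. snd y \<le> snd x) (cq s)" using i by (auto simp: inv3_def)
  let ?N = "map (\<lambda>c. (c, prio b)) (rev (children b))"
  have n1: "\<forall>p\<in>set ?N. snd p = prio (fst p)" using inherit by auto
  have n2: "sorted_wrt (\<lambda>x y. snd y \<le> snd x) ?N"
    by (simp add: sorted_wrt_map sorted_wrt_iff_nth_less)
  have "sorted_wrt (\<lambda>x y. snd y \<le> snd x) (?N @ cq s)"
    using n2 i2 le by (auto simp: sorted_wrt_append)
  then show ?thesis using n1 i1 unfolding s' inv3_def lb by auto
next
  fix b assume "dispatch_step prio s b s'"
  then show ?thesis using i
    apply (auto simp: dispatch_step_def inv3_def)
     apply (case_tac "cq s", auto)
     apply (metis fst_conv order_trans snd_conv)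
    apply (metis fst_conv snd_conv)
    done
qed

lemma inv3_reach:
  assumes inherit: "\<And>j c. c \<in> set (children j) \<Longrightarrow> prio c = prio j"
    and reach: "exec_reachable prio roots children s"
  shows "inv3 prio s"
proof -
  obtain s0 where "exec_init s0" and r: "(exec_step prio roots children)\<^sup>*\<^sup>* s0 s"
    using reach by (auto simp: exec_reachable_def)
  then have "inv3 prio s0" by (auto simp: exec_init_def inv3_def)
  with r show ?thesis
    by (induction rule: rtranclp_induct) (auto intro: inv3_step[OF inherit])
qed

theorem lemma3:
  fixes prio :: "'j \<Rightarrow> int" and roots :: "'j set" and children :: "'j \<Rightarrow> 'j list"
  assumes inherit: "\<And>j c. c \<in> set (children j) \<Longrightarrow> prio c = prio j"
    and roots_no_parent: "\<And>j c. c \<in> set (children j) \<Longrightarrow> c \<notin> roots"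
    and unique_parent: "\<And>j1 j2 c. c \<in> set (children j1) \<Longrightarrow> c \<in> set (children j2) \<Longrightarrow> j1 = j2"
    and distinct_children: "\<And>j. distinct (children j)"
    and reach: "exec_reachable prio roots children s"
    and disp: "dispatch_step prio s b s'"
    and a_pending: "a \<in> pending s'"
  shows "prio a \<le> prio b"
proof -
  have i: "inv3 prio s" using inv3_reach[OF inherit reach] .
  then have i1: "\<forall>p\<in>set (cq s). snd p = prio (fst p)"
    and i2: "sorted_wrt (\<lambda>x y. snd y \<le> snd x) (cq s)" by (auto simp: inv3_def)
  have ge: "\<forall>p\<in>set cs. snd p \<le> v" if "cq s = (c, v) # cs" for c v cs
    using i2 that by auto
  from disp consider
      (r) "b \<in> rq s" "\<forall>x\<in>rq s. prio x \<le> prio b" "\<forall>c v cs. cq s = (c, v) # cs \<longrightarrow> v \<le> prio b"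
        "s' = s\<lparr>rq := rq s - {b}, running := Some b, latest := prio b\<rparr>"
    | (c) v cs where "cq s = (b, v) # cs" "\<forall>x\<in>rq s. prio x \<le> v"
        "s' = s\<lparr>cq := cs, running := Some b, latest := v\<rparr>"
    unfolding dispatch_step_def by blast
  then show ?thesis
  proof cases
    case r
    show ?thesis
    proof (cases "a \<in> rq s")
      case True then show ?thesis using r by auto
    next
      case False
      then obtain w where aw: "(a, w) \<in> set (cq s)" using a_pending r(4) by (auto simp: pending_def)
      then obtain c0 v0 cs where cqs: "cq s = (c0, v0) # cs" by (cases "cq s") auto
      have "w \<le> v0" using aw cqs ge[OF cqs] by auto
      moreover have "v0 \<le> prio b" using r(3) cqs by blast
      moreover have "w = prio a" using aw i1 by force
      ultimately show ?thesis by simp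
    qed
  next
    case c
    have vb: "v = prio b" using c(1) i1 by auto
    show ?thesis
    proof (cases "a \<in> rq s")
      case True then show ?thesis using c vb by auto
    next
      case False
      then obtain w where aw: "(a, w) \<in> set cs" using a_pending c(3) by (auto simp: pending_def)
      then have "w \<le> v" using ge[OF c(1)] by auto
      moreover have "w = prio a" using aw i1 c(1) by force
      ultimately show ?thesis using vb by simp
    qed
  qed
qed

end
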